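(* Let $\mathbb{F}$ be a field and let $q\in\mathbb{F}$ be a root of unity with $q\neq 1$; let $p\geq 2$ be the least positive integer with $q^p=1$. Let $\mathcal{H}$ be the unital associative $\mathbb{F}$-algebra generated by $A,B$ subject to $AB-qBA=I$, with $[f,g]=fg-gf$ and $\Lambda:=AB-BA$. Call an element of $\mathcal{H}$ a "special basis element" if it is of the form $B^m\Lambda^n$ or $\Lambda^nA^m$ with $m,n$ positive integers both congruent to $0$ modulo $p$. Then for every $m,k\in\mathbb{N}$ and every $n,l\in\mathbb{Z}^+$, each of the commutators $$[\Lambda^m,\Lambda^kA^l],\quad [\Lambda^m,B^l\Lambda^k],\quad [\Lambda^mA^n,\Lambda^kA^l],\quad [\Lambda^mA^n,B^l\Lambda^k]\ \ (n\neq l),\quad [B^n\Lambda^m,B^l\Lambda^k],$$ when expanded as a linear combination of the basis $\{\Lambda^k,\ \Lambda^kA^l,\ B^l\Lambda^k : k\in\mathbb{N},\ l\in\mathbb{Z}^+\}$ of $\mathcal{H}$, has coefficient zero at every special basis element.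
   Context: $\mathbb{N}$ denotes the nonnegative integers, $\mathbb{Z}^+$ the positive integers, $f^0=I$. The elements $\Lambda^k$, $\Lambda^kA^l$, $B^l\Lambda^k$ ($k\in\mathbb{N}$, $l\in\mathbb{Z}^+$) form a basis of $\mathcal{H}$. *)

theory Defs
  imports Main "HOL-Library.Function_Algebras"
begin

(* The free unital associative algebra F<A,B>: an element is a function from words
   (lists over bool; False = A, True = B) to coefficients.  Only finitely supported
   elements are ever built below.  Additive structure is the pointwise one of
   Function_Algebras; the (noncommutative) product is the convolution on words. *)

type_synonym 'k fa = "bool list \<Rightarrow> 'k"

definition fa_mult :: "'k::comm_ring_1 fa \<Rightarrow> 'k fa \<Rightarrow> 'k fa" (infixl "\<odot>" 70) where
  "f \<odot> g = (\<lambda>w. \<Sum>i\<le>length w. f (take i w) * g (drop i w))"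

definition fa_mon :: "'k::comm_ring_1 \<Rightarrow> bool list \<Rightarrow> 'k fa" where
  "fa_mon c u = (\<lambda>w. if w = u then c else 0)"

definition fa_smult :: "'k::comm_ring_1 \<Rightarrow> 'k fa \<Rightarrow> 'k fa" where
  "fa_smult c f = (\<lambda>w. c * f w)"

definition fa_I :: "'k::comm_ring_1 fa" where "fa_I = fa_mon 1 []"
definition fa_A :: "'k::comm_ring_1 fa" where "fa_A = fa_mon 1 [False]"
definition fa_B :: "'k::comm_ring_1 fa" where "fa_B = fa_mon 1 [True]"

fun fa_pow :: "'k::comm_ring_1 fa \<Rightarrow> nat \<Rightarrow> 'k fa" where
  "fa_pow f 0 = fa_I"
| "fa_pow f (Suc n) = f \<odot> fa_pow f n"

definition fa_rel :: "'k::field \<Rightarrow> 'k fa" where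
  "fa_rel q = fa_A \<odot> fa_B - fa_smult q (fa_B \<odot> fa_A) - fa_I"

inductive_set heis_ideal :: "'k::field \<Rightarrow> 'k fa set" for q :: "'k" where
  zero: "(\<lambda>_. 0) \<in> heis_ideal q"
| gen: "fa_smult c (fa_mon 1 u \<odot> fa_rel q \<odot> fa_mon 1 v) \<in> heis_ideal q"
| add: "x \<in> heis_ideal q \<Longrightarrow> y \<in> heis_ideal q \<Longrightarrow> x + y \<in> heis_ideal q"

definition heis_eq :: "'k::field \<Rightarrow> 'k fa \<Rightarrow> 'k fa \<Rightarrow> bool" where
  "heis_eq q x y \<longleftrightarrow> x - y \<in> heis_ideal q"

definition fa_comm :: "'k::comm_ring_1 fa \<Rightarrow> 'k fa \<Rightarrow> 'k fa" where
  "fa_comm f g = f \<odot> g - g \<odot> f"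

definition fa_Lam :: "'k::comm_ring_1 fa" where
  "fa_Lam = fa_A \<odot> fa_B - fa_B \<odot> fa_A"

datatype hbasis = BLam nat | BLamA nat nat | BBLam nat nat

fun hb_valid :: "hbasis \<Rightarrow> bool" where
  "hb_valid (BLam k) = True"
| "hb_valid (BLamA k l) = (0 < l)"
| "hb_valid (BBLam l k) = (0 < l)"

fun hb_elem :: "hbasis \<Rightarrow> 'k::comm_ring_1 fa" where
  "hb_elem (BLam k) = fa_pow fa_Lam k"
| "hb_elem (BLamA k l) = fa_pow fa_Lam k \<odot> fa_pow fa_A l"
| "hb_elem (BBLam l k) = fa_pow fa_B l \<odot> fa_pow fa_Lam k"

fun hb_special :: "nat \<Rightarrow> hbasis \<Rightarrow> bool" where
  "hb_special p (BLam k) = False"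
| "hb_special p (BLamA n m) = (0 < n \<and> 0 < m \<and> p dvd n \<and> p dvd m)"
| "hb_special p (BBLam m n) = (0 < n \<and> 0 < m \<and> p dvd n \<and> p dvd m)"

definition is_expansion :: "'k::field \<Rightarrow> 'k fa \<Rightarrow> (hbasis \<Rightarrow> 'k) \<Rightarrow> bool" where
  "is_expansion q x c \<longleftrightarrow> finite {b. c b \<noteq> 0} \<and> (\<forall>b. c b \<noteq> 0 \<longrightarrow> hb_valid b) \<and>
     heis_eq q x (\<Sum>b\<in>{b. c b \<noteq> 0}. fa_smult (c b) (hb_elem b))"

definition special_coeffs_zero :: "'k::field \<Rightarrow> nat \<Rightarrow> 'k fa \<Rightarrow> bool" where
  "special_coeffs_zero q p x \<longleftrightarrow>
     (\<forall>c. is_expansion q x c \<longrightarrow> (\<forall>b. hb_special p b \<longrightarrow> c b = 0))"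

end

theory Submission
  imports Defs "HOL-Computational_Algebra.Formal_Power_Series"
begin

unbundle fps_syntax

definition supp :: "'k::comm_ring_1 fa \<Rightarrow> bool list set" where
  "supp x = {w. x w \<noteq> 0}"

definition lin :: "(bool list \<Rightarrow> 'k) \<Rightarrow> 'k::comm_ring_1 fa \<Rightarrow> 'k" where
  "lin c x = (\<Sum>w\<in>supp x. x w * c w)"

lemma lin_sup:
  assumes "finite S" "supp x \<subseteq> S"
  shows "lin c x = (\<Sum>w\<in>S. x w * c w)"
  unfolding lin_def
  by (rule sum.mono_neutral_left) (use assms in \<open>auto simp: supp_def\<close>)

lemma fun_sum_apply: "(\<Sum>b\<in>B. (f b :: 'a \<Rightarrow> 'b::comm_monoid_add)) w = (\<Sum>b\<in>B. f b w)"
  by (induction B rule: infinite_finite_induct) auto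

lemma supp_add: "supp (x + y) \<subseteq> supp x \<union> supp y"
  by (auto simp: supp_def)
lemma supp_diff: "supp (x - y) \<subseteq> supp x \<union> supp y"
  by (auto simp: supp_def)
lemma supp_smult: "supp (fa_smult a x) \<subseteq> supp x"
  by (auto simp: supp_def fa_smult_def)
lemma supp_mon: "supp (fa_mon a u) \<subseteq> {u}"
  by (auto simp: supp_def fa_mon_def)
lemma supp_zero: "supp (0::'k::comm_ring_1 fa) = {}"
  by (auto simp: supp_def)

lemma supp_mult: "supp (x \<odot> y) \<subseteq> (\<lambda>(u,v). u @ v) ` (supp x \<times> supp y)"
proof
  fix w assume "w \<in> supp (x \<odot> y)"
  then have "(\<Sum>i\<le>length w. x (take i w) * y (drop i w)) \<noteq> 0"
    by (simp add: supp_def fa_mult_def)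
  then obtain i where "x (take i w) * y (drop i w) \<noteq> 0"
    using sum.not_neutral_contains_not_neutral by blast
  then have "take i w \<in> supp x" "drop i w \<in> supp y" by (auto simp: supp_def)
  then show "w \<in> (\<lambda>(u,v). u @ v) ` (supp x \<times> supp y)"
    by (metis (no_types, lifting) append_take_drop_id case_prod_conv image_iff mem_Sigma_iff)
qed

lemma fs_add: "finite (supp x) \<Longrightarrow> finite (supp y) \<Longrightarrow> finite (supp (x + y))"
  by (meson finite_Un finite_subset supp_add)
lemma fs_diff: "finite (supp x) \<Longrightarrow> finite (supp y) \<Longrightarrow> finite (supp (x - y))"
  by (meson finite_Un finite_subset supp_diff)
lemma fs_smult: "finite (supp x) \<Longrightarrow> finite (supp (fa_smult a x))"
  by (meson finite_subset supp_smult)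
lemma fs_mon: "finite (supp (fa_mon a u))"
  by (meson finite.emptyI finite_insert finite_subset supp_mon)
lemma fs_mult: "finite (supp x) \<Longrightarrow> finite (supp y) \<Longrightarrow> finite (supp (x \<odot> y))"
  by (rule finite_subset[OF supp_mult]) auto
lemma fs_sum: "(\<And>b. b \<in> B \<Longrightarrow> finite (supp (f b))) \<Longrightarrow> finite (supp (\<Sum>b\<in>B. f b))"
  by (induction B rule: infinite_finite_induct) (auto simp: supp_zero intro!: fs_add)

lemma lin_add: "finite (supp x) \<Longrightarrow> finite (supp y) \<Longrightarrow> lin c (x + y) = lin c x + lin c y"
  apply (subst (1 2 3) lin_sup[where S = "supp x \<union> supp y"])
  using supp_add by (auto simp: sum.distrib distrib_right)
lemma lin_diff: "finite (supp x) \<Longrightarrow> finite (supp y) \<Longrightarrow> lin c (x - y) = lin c x - lin c y"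
  apply (subst (1 2 3) lin_sup[where S = "supp x \<union> supp y"])
  using supp_diff by (auto simp: sum_subtractf left_diff_distrib)
lemma lin_smult: "finite (supp x) \<Longrightarrow> lin c (fa_smult a x) = a * lin c x"
  apply (subst (1 2) lin_sup[where S = "supp x"])
  using supp_smult by (auto simp: sum_distrib_left fa_smult_def mult.assoc)
lemma lin_mon: "lin c (fa_mon a u) = a * c u"
  apply (subst lin_sup[where S = "{u}"])
  using supp_mon by (auto simp: fa_mon_def)
lemma lin_zero: "lin c 0 = 0"
  by (simp add: lin_def supp_zero)
lemma lin_sum: "finite B \<Longrightarrow> (\<And>b. b \<in> B \<Longrightarrow> finite (supp (f b))) \<Longrightarrow>
   lin c (\<Sum>b\<in>B. f b) = (\<Sum>b\<in>B. lin c (f b))"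
  by (induction B rule: finite_induct) (auto simp: lin_zero lin_add fs_sum)
lemma lin_cdiff: "lin (\<lambda>w. c1 w - c2 w) x = lin c1 x - lin c2 x"
  by (simp add: lin_def sum_subtractf right_diff_distrib)
lemma lin_cong: "(\<And>w. w \<in> supp x \<Longrightarrow> c1 w = c2 w) \<Longrightarrow> lin c1 x = lin c2 x"
  by (simp add: lin_def)
lemma lin_czero: "lin (\<lambda>w. 0) x = 0"
  by (simp add: lin_def)

lemma sum_take_delta:
  "(\<Sum>i\<le>length w. if u = take i w then f i else 0) = (if take (length u) w = u then f (length u) else (0::'a::comm_monoid_add))"
proof (cases "take (length u) w = u")
  case True
  then have le: "length u \<le> length w" by (metis length_take min.bounded_iff nle_le)
  have "(\<Sum>i\<le>length w. if u = take i w then f i else 0) = (\<Sum>i\<le>length w. if i = length u then f i else 0)"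
    by (rule sum.cong) (use True in \<open>auto\<close>)
  also have "\<dots> = f (length u)" using le by (simp add: sum.delta')
  finally show ?thesis using True by simp
next
  case False
  then have "\<And>i. i \<le> length w \<Longrightarrow> u \<noteq> take i w" by auto
  then show ?thesis using False by simp
qed

lemma sum_app_delta:
  assumes "finite S" "\<And>v. v \<notin> S \<Longrightarrow> y v = 0"
  shows "(\<Sum>v\<in>S. if u @ v = w then a * y v else 0) = (if take (length u) w = u then a * y (drop (length u) w) else (0::'a::comm_semiring_0))"
proof -
  have "(\<Sum>v\<in>S. if u @ v = w then a * y v else 0) = (\<Sum>v\<in>S. if v = drop (length u) w \<and> take (length u) w = u then a * y v else 0)"
    by (rule sum.cong) (auto simp: append_eq_conv_conj)
  also have "\<dots> = (if take (length u) w = u then a * y (drop (length u) w) else 0)"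
    using assms by (auto simp: sum.delta')
  finally show ?thesis .
qed

lemma mult_pointwise:
  assumes "finite (supp x)" "finite (supp y)"
  shows "(x \<odot> y) w = (\<Sum>u\<in>supp x. \<Sum>v\<in>supp y. if u @ v = w then x u * y v else 0)"
proof -
  have "(x \<odot> y) w = (\<Sum>i\<le>length w. \<Sum>u\<in>supp x. if u = take i w then x u * y (drop i w) else 0)"
    unfolding fa_mult_def
    by (rule sum.cong) (use assms in \<open>auto simp: sum.delta supp_def\<close>)
  also have "\<dots> = (\<Sum>u\<in>supp x. \<Sum>i\<le>length w. if u = take i w then x u * y (drop i w) else 0)"
    by (rule sum.swap)
  also have "\<dots> = (\<Sum>u\<in>supp x. if take (length u) w = u then x u * y (drop (length u) w) else 0)"
    by (subst sum_take_delta) simp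
  also have "\<dots> = (\<Sum>u\<in>supp x. \<Sum>v\<in>supp y. if u @ v = w then x u * y v else 0)"
    by (rule sum.cong[OF refl], rule sum_app_delta[symmetric]) (use assms in \<open>auto simp: supp_def\<close>)
  finally show ?thesis .
qed

lemma lin_mult_sum:
  assumes fx: "finite (supp x)" and fy: "finite (supp y)"
  shows "lin c (x \<odot> y) = (\<Sum>u\<in>supp x. \<Sum>v\<in>supp y. x u * y v * c (u @ v))"
proof -
  let ?T = "(\<lambda>(u,v). u @ v) ` (supp x \<times> supp y)"
  have fT: "finite ?T" using assms by auto
  have "lin c (x \<odot> y) = (\<Sum>w\<in>?T. (x \<odot> y) w * c w)"
    by (rule lin_sup[OF fT supp_mult])
  also have "\<dots> = (\<Sum>w\<in>?T. \<Sum>u\<in>supp x. \<Sum>v\<in>supp y. if u @ v = w then x u * y v * c w else 0)"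
    apply (rule sum.cong[OF refl])
    apply (simp only: mult_pointwise[OF assms] sum_distrib_right)
    apply (rule sum.cong[OF refl], rule sum.cong[OF refl])
    by simp
  also have "\<dots> = (\<Sum>u\<in>supp x. \<Sum>v\<in>supp y. \<Sum>w\<in>?T. if u @ v = w then x u * y v * c w else 0)"
    by (simp add: sum.swap[of _ ?T] sum.swap[of _ ?T "supp y"])
  also have "\<dots> = (\<Sum>u\<in>supp x. \<Sum>v\<in>supp y. x u * y v * c (u @ v))"
    by (rule sum.cong[OF refl], rule sum.cong[OF refl]) (use fT in \<open>auto simp: sum.delta\<close>)
  finally show ?thesis .
qed

lemma lin_mult:
  assumes "finite (supp x)" "finite (supp y)"
  shows "lin c (x \<odot> y) = lin (\<lambda>u. lin (\<lambda>v. c (u @ v)) y) x"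
  apply (subst lin_mult_sum[OF assms])
  by (simp add: lin_def sum_distrib_left mult.assoc)

lemma mon_mult: "fa_mon a u \<odot> fa_mon b v = fa_mon (a * b) (u @ v)"
proof
  fix w
  have "(fa_mon a u \<odot> fa_mon b v) w = (\<Sum>i\<le>length w. if u = take i w then (if drop i w = v then a * b else 0) else 0)"
    unfolding fa_mult_def fa_mon_def by (rule sum.cong) auto
  also have "\<dots> = (if take (length u) w = u then (if drop (length u) w = v then a * b else 0) else 0)"
    by (rule sum_take_delta)
  also have "\<dots> = fa_mon (a * b) (u @ v) w"
  proof -
    have "(take (length u) w = u \<and> drop (length u) w = v) \<longleftrightarrow> w = u @ v"
      by (metis append_eq_conv_conj)
    then show ?thesis by (auto simp: fa_mon_def)
  qed
  finally show "(fa_mon a u \<odot> fa_mon b v) w = fa_mon (a * b) (u @ v) w" .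
qed

lemma fa_pow_A: "fa_pow fa_A l = fa_mon 1 (replicate l False)"
  by (induction l) (simp_all add: fa_I_def fa_A_def mon_mult)
lemma fa_pow_B: "fa_pow fa_B l = fa_mon 1 (replicate l True)"
  by (induction l) (simp_all add: fa_I_def fa_B_def mon_mult)

lemma fa_Lam_mon: "fa_Lam = fa_mon 1 [False, True] - fa_mon 1 [True, False]"
  by (simp add: fa_Lam_def fa_A_def fa_B_def mon_mult)

lemma fa_rel_mon: "fa_rel q = fa_mon 1 [False, True] - fa_smult q (fa_mon 1 [True, False]) - fa_mon 1 []"
  by (simp add: fa_rel_def fa_A_def fa_B_def fa_I_def mon_mult)

lemma fs_Lam: "finite (supp fa_Lam)"
  by (simp add: fa_Lam_mon fs_diff fs_mon)
lemma fs_rel: "finite (supp (fa_rel q))"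
  by (simp add: fa_rel_mon fs_diff fs_mon fs_smult)
lemma fs_pow: "finite (supp f) \<Longrightarrow> finite (supp (fa_pow f n))"
  by (induction n) (auto simp: fa_I_def fs_mon fs_mult)
lemma fs_hb: "finite (supp (hb_elem b))"
  by (cases b) (auto simp: fs_pow fs_mult fs_Lam fa_pow_A fa_pow_B fs_mon)

lemma lin_Lam: "lin c fa_Lam = c [False, True] - c [True, False]"
  by (simp add: fa_Lam_mon lin_diff fs_mon lin_mon)
lemma lin_rel: "lin c (fa_rel q) = c [False, True] - q * c [True, False] - c []"
  by (simp add: fa_rel_mon lin_diff fs_mon lin_mon fs_smult fs_diff lin_smult)



definition sc :: "'k::comm_ring_1 \<Rightarrow> 'k fps \<Rightarrow> 'k fps" where
  "sc t f = Abs_fps (\<lambda>n. t ^ n * f $ n)"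

lemma sc_nth [simp]: "sc t f $ n = t ^ n * f $ n"
  by (simp add: sc_def)

lemma sc_mult: "sc t (f * g) = sc t f * sc t (g :: 'k::comm_ring_1 fps)"
proof (rule fps_ext)
  fix n
  have "sc t (f * g) $ n = (\<Sum>i=0..n. t ^ n * (f $ i * g $ (n - i)))"
    by (simp add: fps_mult_nth sum_distrib_left)
  also have "\<dots> = (\<Sum>i=0..n. (t ^ i * f $ i) * (t ^ (n - i) * g $ (n - i)))"
  proof (rule sum.cong[OF refl])
    fix i assume "i \<in> {0..n}"
    then have "t ^ n = t ^ i * t ^ (n - i)" by (simp add: power_add[symmetric])
    then show "t ^ n * (f $ i * g $ (n - i)) = (t ^ i * f $ i) * (t ^ (n - i) * g $ (n - i))"
      by (simp add: algebra_simps)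
  qed
  also have "\<dots> = (sc t f * sc t g) $ n" by (simp add: fps_mult_nth)
  finally show "sc t (f * g) $ n = (sc t f * sc t g) $ n" .
qed

lemma sc_sc: "sc t (sc s f) = sc (t * s) f"
  by (rule fps_ext) (simp add: power_mult_distrib)
lemma sc_1: "sc 1 f = f"
  by (rule fps_ext) simp
lemma sc_one: "sc t 1 = 1"
  by (rule fps_ext) simp
lemma sc_diff: "sc t (f - g) = sc t f - sc t g"
  by (rule fps_ext) (simp add: algebra_simps)

lemma sc_add: "sc t (f + g) = sc t f + sc t g"
  by (rule fps_ext) (simp add: algebra_simps)
lemma sc_cmult: "sc t (fps_const c * f) = fps_const c * sc t f"
  by (rule fps_ext) (simp add: algebra_simps)

lemma sc_const: "sc t (fps_const c) = fps_const c"
  by (rule fps_ext) simp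

lemma sc_zero: "sc t 0 = 0"
  by (rule fps_ext) simp

definition gB :: "'k::field \<Rightarrow> 'k fps" where
  "gB q = fps_const (inverse (q - 1)) * (fps_X - 1)"

fun dg :: "bool list \<Rightarrow> int" where
  "dg [] = 0"
| "dg (a # w) = (if a then dg w - 1 else dg w + 1)"

fun pol :: "'k::field \<Rightarrow> bool list \<Rightarrow> 'k fps" where
  "pol q [] = 1"
| "pol q (a # w) = (if a then gB q * sc (inverse q) (pol q w) else sc q (pol q w))"

definition cf :: "'k::field \<Rightarrow> int \<Rightarrow> nat \<Rightarrow> bool list \<Rightarrow> 'k" where
  "cf q d j w = (if dg w = d then pol q w $ j else 0)"

lemma dg_append: "dg (u @ v) = dg u + dg v"
  by (induction u) auto

lemma pol_append:
  assumes "q \<noteq> 0"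
  shows "pol q (u @ v) = pol q u * sc (q powi dg u) (pol q v)"
proof (induction u)
  case Nil
  then show ?case by (simp add: sc_1)
next
  case (Cons a u)
  show ?case
  proof (cases a)
    case True
    have "q powi (dg u - 1) = inverse q * q powi dg u"
      using assms by (simp add: power_int_diff field_simps)
    then show ?thesis using True Cons by (simp add: sc_mult sc_sc mult.assoc)
  next
    case False
    have "q powi (dg u + 1) = q * q powi dg u"
      using assms by (simp add: power_int_add)
    then show ?thesis using False Cons by (simp add: sc_mult sc_sc)
  qed
qed

lemma gB_nth: "gB q $ n = (if n = 0 then - inverse (q - 1) else if n = 1 then inverse (q - 1) else 0)"
  by (simp add: gB_def fps_X_nth)
lemma gB_rel: "q \<noteq> 1 \<Longrightarrow> sc q (gB q) - fps_const q * gB q = (1 :: 'k::field fps)"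
proof (rule fps_ext)
  fix n assume q: "q \<noteq> 1"
  then have "q - 1 \<noteq> 0" by simp
  have h: "1 + q * q \<noteq> q * 2"
  proof
    assume "1 + q * q = q * 2"
    then have "(q - 1) * (q - 1) = 0" by (simp add: algebra_simps)
    then show False using \<open>q - 1 \<noteq> 0\<close> by simp
  qed
  show "(sc q (gB q) - fps_const q * gB q) $ n = (1::'k fps) $ n"
    by (cases "n = 0"; cases "n = 1") (use \<open>q - 1 \<noteq> 0\<close> h in \<open>auto simp: gB_nth field_simps\<close>)
qed

lemma gB_lam: "q \<noteq> 1 \<Longrightarrow> sc q (gB q) - gB q = (fps_X :: 'k::field fps)"
proof (rule fps_ext)
  fix n assume q: "q \<noteq> 1"
  then have "q - 1 \<noteq> 0" by simp
  have h: "1 + q * q \<noteq> q * 2"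
  proof
    assume "1 + q * q = q * 2"
    then have "(q - 1) * (q - 1) = 0" by (simp add: algebra_simps)
    then show False using \<open>q - 1 \<noteq> 0\<close> by simp
  qed
  show "(sc q (gB q) - gB q) $ n = (fps_X :: 'k fps) $ n"
    by (cases "n = 0"; cases "n = 1") (use \<open>q - 1 \<noteq> 0\<close> h in \<open>auto simp: gB_nth fps_X_nth field_simps\<close>)
qed

lemma pol_FT: "q \<noteq> 0 \<Longrightarrow> pol q (False # True # v) = sc q (gB q) * pol q v"
  by (simp add: sc_mult sc_sc sc_1)
lemma pol_TF: "q \<noteq> 0 \<Longrightarrow> pol q (True # False # v) = gB q * pol q v"
  by (simp add: sc_sc sc_1)

definition good :: "'k::field \<Rightarrow> (bool list \<Rightarrow> 'k) \<Rightarrow> bool" where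
  "good q c \<longleftrightarrow> (\<forall>u v. c (u @ [False, True] @ v) - q * c (u @ [True, False] @ v) - c (u @ v) = 0)"

lemma good_cf:
  assumes "q \<noteq> 0" "q \<noteq> 1"
  shows "good q (cf q d j)"
  unfolding good_def
proof (intro allI)
  fix u v :: "bool list"
  let ?t = "q powi dg u"
  have "pol q (False # True # v) - fps_const q * pol q (True # False # v) - pol q v
     = (sc q (gB q) - fps_const q * gB q - 1) * pol q v"
    by (simp only: pol_FT[OF assms(1)] pol_TF[OF assms(1)]) (simp add: algebra_simps)
  then have e: "pol q (False # True # v) - fps_const q * pol q (True # False # v) - pol q v = 0"
    using gB_rel[OF assms(2)] by simp
  have "pol q (u @ [False, True] @ v) - fps_const q * pol q (u @ [True, False] @ v) - pol q (u @ v)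
        = pol q u * sc ?t (pol q (False # True # v) - fps_const q * pol q (True # False # v) - pol q v)"
    using assms(1) by (simp add: pol_append sc_diff sc_mult sc_add sc_cmult sc_sc sc_1 sc_const algebra_simps)
  also have "\<dots> = 0" by (simp only: e sc_zero mult_zero_right)
  finally have z: "pol q (u @ [False, True] @ v) - fps_const q * pol q (u @ [True, False] @ v) - pol q (u @ v) = 0" .
  have "pol q (u @ [False, True] @ v) $ j - q * pol q (u @ [True, False] @ v) $ j - pol q (u @ v) $ j = 0"
    using arg_cong[OF z, of "\<lambda>f. f $ j"] by simp
  then show "cf q d j (u @ [False, True] @ v) - q * cf q d j (u @ [True, False] @ v) - cf q d j (u @ v) = 0"
    by (simp add: cf_def dg_append)
qed

lemma powi_unit:
  fixes q :: "'k::field"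
  assumes "q ^ p = 1" "0 < p" "int p dvd e"
  shows "q powi e = 1"
proof -
  obtain r where r: "e = int p * r" using assms(3) by (auto elim: dvdE)
  have "q \<noteq> 0" using assms by (metis power_0_left zero_neq_one gr_implies_not0)
  have "q powi e = (q powi int p) powi r" using r by (simp add: power_int_mult)
  also have "\<dots> = 1" using assms by (simp add: power_int_of_nat)
  finally show ?thesis .
qed

lemma trace_cf:
  fixes q :: "'k::field"
  assumes "q ^ p = 1" "0 < p" "p dvd j" "int p dvd d"
  shows "cf q d j (u @ v) = cf q d j (v @ u)"
proof -
  have q0: "q \<noteq> 0" using assms by (metis power_0_left zero_neq_one gr_implies_not0)
  define a where "a = q powi dg u"
  define b where "b = q powi dg v"
  show ?thesis
  proof (cases "dg u + dg v = d")
    case False then show ?thesis by (simp add: cf_def dg_append add.commute)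
  next
    case True
    have ab: "a * b = 1" unfolding a_def b_def
      using powi_unit[OF assms(1,2,4)] True q0 by (simp add: power_int_add[symmetric])
    have aj: "a ^ j = 1"
    proof -
      obtain r where "j = p * r" using assms(3) by (auto elim: dvdE)
      then have "q ^ j = 1" using assms(1) by (simp add: power_mult)
      then have "(q ^ j) powi dg u = 1" by simp
      then show ?thesis unfolding a_def using q0
        by (metis power_int_mult power_int_of_nat mult.commute)
    qed
    have a0: "a \<noteq> 0" using ab by auto
    have key: "a ^ (j - i) = b ^ i" if "i \<le> j" for i
    proof -
      have "a ^ (j - i) * a ^ i = 1" using aj that by (simp add: power_add[symmetric])
      moreover have "b ^ i * a ^ i = 1" using ab by (simp add: power_mult_distrib[symmetric] mult.commute)
      ultimately show ?thesis using a0 by (metis mult_right_cancel power_not_zero zero_neq_one mult_zero_left)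
    qed
    have "pol q (u @ v) $ j = (\<Sum>i=0..j. pol q u $ i * (a ^ (j - i) * pol q v $ (j - i)))"
      by (simp add: pol_append[OF q0] fps_mult_nth a_def)
    also have "\<dots> = (\<Sum>i=0..j. pol q u $ i * (b ^ i * pol q v $ (j - i)))"
      by (rule sum.cong) (auto simp: key)
    also have "\<dots> = (\<Sum>i=0..j. pol q u $ (j - i) * (b ^ (j - i) * pol q v $ (j - (j - i))))"
      by (rule sum.atLeastAtMost_rev[where n = 0, simplified])
    also have "\<dots> = (\<Sum>i=0..j. pol q v $ i * (b ^ (j - i) * pol q u $ (j - i)))"
      by (rule sum.cong) (auto simp: algebra_simps)
    also have "\<dots> = pol q (v @ u) $ j"
      by (simp add: pol_append[OF q0] fps_mult_nth b_def)
    finally show ?thesis by (simp add: cf_def dg_append add.commute)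
  qed
qed



definition DD :: "(bool list \<Rightarrow> 'k::comm_ring_1) \<Rightarrow> bool list \<Rightarrow> 'k" where
  "DD c v = c (False # True # v) - c (True # False # v)"

lemma DD_eq: "DD c = (\<lambda>w. c (False # True # w) - c (True # False # w))"
  by (rule ext) (simp add: DD_def)

lemma lin_Lam_mult: "finite (supp y) \<Longrightarrow> lin c (fa_Lam \<odot> y) = lin (DD c) y"
  by (simp add: lin_mult fs_Lam lin_Lam lin_cdiff[symmetric] DD_eq)

lemma lin_Lam_pow_zero:
  assumes "\<And>v. dg v \<noteq> e \<Longrightarrow> c v = 0" "e \<noteq> 0"
  shows "lin c (fa_pow fa_Lam k) = 0"
  using assms(1)
proof (induction k arbitrary: c)
  case 0
  then show ?case using assms(2) by (simp add: fa_I_def lin_mon)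
next
  case (Suc k)
  have "lin c (fa_pow fa_Lam (Suc k)) = lin (DD c) (fa_pow fa_Lam k)"
    by (simp add: lin_Lam_mult fs_pow fs_Lam)
  also have "\<dots> = 0"
    by (rule Suc.IH) (simp add: DD_def Suc.prems)
  finally show ?case .
qed

lemma lin_Lam_pow_family:
  assumes "\<And>j v. DD (C j) v = (if j = 0 then 0 else C (j - 1) v)"
    and "\<And>j. C j [] = (if j = 0 then 1 else 0)"
  shows "lin (C j) (fa_pow fa_Lam k) = (if j = k then 1 else 0)"
proof (induction k arbitrary: j)
  case 0
  then show ?case using assms(2) by (simp add: fa_I_def lin_mon)
next
  case (Suc k)
  have "lin (C j) (fa_pow fa_Lam (Suc k)) = lin (DD (C j)) (fa_pow fa_Lam k)"
    by (simp add: lin_Lam_mult fs_pow fs_Lam)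
  also have "\<dots> = lin (\<lambda>v. if j = 0 then 0 else C (j - 1) v) (fa_pow fa_Lam k)"
  proof -
    have "DD (C j) = (\<lambda>v. if j = 0 then 0 else C (j - 1) v)"
      by (rule ext) (rule assms(1))
    then show ?thesis by simp
  qed
  also have "\<dots> = (if j = Suc k then 1 else 0)"
    using Suc.IH[of "j - 1"] by (cases "j = 0") (auto simp: lin_czero)
  finally show ?case .
qed

definition mirror :: "bool list \<Rightarrow> bool list" where
  "mirror w = rev (map Not w)"

lemma mirror_append: "mirror (u @ v) = mirror v @ mirror u"
  by (simp add: mirror_def)
lemma mirror_mirror: "mirror (mirror w) = w"
  by (simp add: mirror_def rev_map comp_def)
lemma dg_mirror: "dg (mirror w) = - dg w"
  by (induction w) (auto simp: mirror_def dg_append)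
lemma mirror_FT: "mirror [False, True] = [False, True]"
  by (simp add: mirror_def)
lemma mirror_TF: "mirror [True, False] = [True, False]"
  by (simp add: mirror_def)
lemma mirror_repF: "mirror (replicate l False) = replicate l True"
  by (simp add: mirror_def)
lemma mirror_repT: "mirror (replicate l True) = replicate l False"
  by (simp add: mirror_def)
lemma dg_repF: "dg (replicate l False) = int l"
  by (induction l) auto
lemma dg_repT: "dg (replicate l True) = - int l"
  by (induction l) auto
lemma pol_repF: "q \<noteq> 0 \<Longrightarrow> pol q (replicate l False) = 1"
  by (induction l) (auto simp: sc_one)

lemma family_cf:
  assumes "q \<noteq> 0" "q \<noteq> 1"
  shows "DD (cf q 0 j) v = (if j = 0 then 0 else cf q 0 (j - 1) v)"
proof -
  have "pol q (False # True # v) - pol q (True # False # v) = fps_X * pol q v"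
    by (simp only: pol_FT[OF assms(1)] pol_TF[OF assms(1)] left_diff_distrib[symmetric] gB_lam[OF assms(2)])
  then have "pol q (False # True # v) $ j - pol q (True # False # v) $ j = (fps_X * pol q v) $ j"
    by (metis fps_sub_nth)
  then show ?thesis
    by (cases j) (auto simp: DD_def cf_def fps_X_mult_nth)
qed

lemma family_cf_mirror:
  assumes "q \<noteq> 0" "q \<noteq> 1"
  shows "DD (\<lambda>w. cf q 0 j (mirror w)) v = (if j = 0 then 0 else cf q 0 (j - 1) (mirror v))"
proof -
  have m1: "mirror (False # True # v) = mirror v @ [False, True]"
    using mirror_append[of "[False, True]" v] by (simp add: mirror_FT)
  have m2: "mirror (True # False # v) = mirror v @ [True, False]"
    using mirror_append[of "[True, False]" v] by (simp add: mirror_TF)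
  show ?thesis
  proof (cases "dg v = 0")
  case False
  then show ?thesis
    by (simp add: DD_def cf_def dg_mirror m1 m2 dg_append)
next
  case True
  have d: "dg (mirror v) = 0" using True by (simp add: dg_mirror)
  have "pol q (mirror v @ [False, True]) - pol q (mirror v @ [True, False]) = pol q (mirror v) * fps_X"
    using gB_lam[OF assms(2)] assms(1) d
    by (simp add: pol_append sc_1 sc_one right_diff_distrib[symmetric] pol_FT[where v = "[]", simplified] pol_TF[where v = "[]", simplified])
  then have "pol q (mirror v @ [False, True]) $ j - pol q (mirror v @ [True, False]) $ j = (fps_X * pol q (mirror v)) $ j"
    by (metis fps_sub_nth mult.commute)
  then show ?thesis
    using d by (cases j) (auto simp: DD_def cf_def fps_X_mult_nth m1 m2 dg_append)
qed
qed



lemma ideal_lin: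
  assumes "x \<in> heis_ideal q"
  shows "finite (supp x) \<and> (\<forall>c. good q c \<longrightarrow> lin c x = 0)"
  using assms
proof (induction rule: heis_ideal.induct)
  case zero
  show ?case by (simp add: supp_def lin_def)
next
  case (gen c u v)
  have f1: "finite (supp (fa_mon 1 u \<odot> fa_rel q))" by (simp add: fs_mult fs_mon fs_rel)
  have f2: "finite (supp (fa_mon 1 u \<odot> fa_rel q \<odot> fa_mon 1 v))" by (simp add: f1 fs_mult fs_mon)
  show ?case
  proof (intro conjI allI impI)
    show "finite (supp (fa_smult c (fa_mon 1 u \<odot> fa_rel q \<odot> fa_mon 1 v)))" by (rule fs_smult[OF f2])
  next
    fix cc assume g: "good q cc"
    have "lin cc (fa_smult c (fa_mon 1 u \<odot> fa_rel q \<odot> fa_mon 1 v))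
       = c * lin (\<lambda>u'. lin (\<lambda>v'. cc (u' @ v')) (fa_mon 1 v)) (fa_mon 1 u \<odot> fa_rel q)"
      by (simp add: lin_smult f2 lin_mult f1 fs_mon)
    also have "\<dots> = c * lin (\<lambda>u'. cc (u' @ v)) (fa_mon 1 u \<odot> fa_rel q)"
      by (simp add: lin_mon)
    also have "\<dots> = c * lin (\<lambda>u'. lin (\<lambda>r. cc (u' @ r @ v)) (fa_rel q)) (fa_mon 1 u)"
      by (simp add: lin_mult fs_mon fs_rel)
    also have "\<dots> = c * (cc (u @ [False, True] @ v) - q * cc (u @ [True, False] @ v) - cc (u @ v))"
      by (simp add: lin_mon lin_rel)
    also have "\<dots> = 0" using g by (simp add: good_def)
    finally show "lin cc (fa_smult c (fa_mon 1 u \<odot> fa_rel q \<odot> fa_mon 1 v)) = 0" .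
  qed
next
  case (add x y)
  then have fx: "finite (supp x)" and fy: "finite (supp y)"
    and lx: "\<forall>c. good q c \<longrightarrow> lin c x = 0" and ly: "\<forall>c. good q c \<longrightarrow> lin c y = 0" by auto
  show ?case using fs_add[OF fx fy] lin_add[OF fx fy] lx ly by (simp add: plus_fun_def)
qed

lemma lin_comm_zero:
  assumes "\<forall>u v. c (u @ v) = c (v @ u)" "finite (supp x)" "finite (supp y)"
  shows "lin c (fa_comm x y) = 0"
proof -
  have "lin c (x \<odot> y) = (\<Sum>u\<in>supp x. \<Sum>v\<in>supp y. x u * y v * c (u @ v))"
    by (rule lin_mult_sum[OF assms(2,3)])
  also have "\<dots> = (\<Sum>v\<in>supp y. \<Sum>u\<in>supp x. y v * x u * c (v @ u))"
    by (subst sum.swap) (simp add: assms(1) mult.commute)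
  also have "\<dots> = lin c (y \<odot> x)"
    by (rule lin_mult_sum[OF assms(3,2), symmetric])
  finally show ?thesis
    by (simp add: fa_comm_def lin_diff fs_mult assms)
qed

lemma coeff_zero:
  assumes "good q C" "\<forall>u v. C (u @ v) = C (v @ u)"
    and ev: "\<And>b'. hb_valid b' \<Longrightarrow> lin C (hb_elem b') = (if b' = b then 1 else 0)"
    and fx: "finite (supp x)" and fy: "finite (supp y)"
    and ex: "is_expansion q (fa_comm x y) cc"
  shows "cc b = 0"
proof -
  let ?B = "{b. cc b \<noteq> 0}"
  let ?S = "\<Sum>b\<in>?B. fa_smult (cc b) (hb_elem b)"
  from ex have fin: "finite ?B" and val: "\<forall>b. cc b \<noteq> 0 \<longrightarrow> hb_valid b"
    and eq: "fa_comm x y - ?S \<in> heis_ideal q"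
    by (auto simp: is_expansion_def heis_eq_def)
  have fX: "finite (supp (fa_comm x y))" by (simp add: fa_comm_def fs_diff fs_mult fx fy)
  have fS: "finite (supp ?S)" by (rule fs_sum) (simp add: fs_smult fs_hb)
  have "lin C (fa_comm x y - ?S) = 0" using ideal_lin[OF eq] assms(1) by blast
  then have "lin C (fa_comm x y) = lin C ?S" by (simp add: lin_diff fX fS)
  moreover have "lin C (fa_comm x y) = 0" by (rule lin_comm_zero[OF assms(2) fx fy])
  moreover have "lin C ?S = (\<Sum>b'\<in>?B. cc b' * lin C (hb_elem b'))"
    by (simp add: lin_sum fin fs_smult fs_hb lin_smult)
  moreover have "\<dots> = (\<Sum>b'\<in>?B. if b' = b then cc b' else 0)"
    by (rule sum.cong) (auto simp: ev val)
  moreover have "\<dots> = cc b" using fin by (auto simp: sum.delta)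
  ultimately show ?thesis by simp
qed

lemma cf_nonzero_dg: "cf q d j w \<noteq> 0 \<Longrightarrow> dg w = d"
  by (simp add: cf_def split: if_splits)

lemma family_base: "cf q 0 j [] = (if j = 0 then 1 else 0)"
  by (simp add: cf_def)

lemma eval_A:
  assumes q0: "q \<noteq> 0" and q1: "q \<noteq> 1" and m: "0 < m" and vb: "hb_valid b'"
  shows "lin (cf q (int m) n) (hb_elem b') = (if b' = BLamA n m then 1 else 0)"
proof (cases b')
  case (BLam k)
  have "lin (cf q (int m) n) (fa_pow fa_Lam k) = 0"
    by (rule lin_Lam_pow_zero[where e = "int m"]) (use m in \<open>auto simp: cf_def\<close>)
  then show ?thesis using BLam by simp
next
  case (BLamA k l)
  have "lin (cf q (int m) n) (hb_elem b') = lin (\<lambda>u. lin (\<lambda>v. cf q (int m) n (u @ v)) (fa_mon 1 (replicate l False))) (fa_pow fa_Lam k)"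
    using BLamA by (simp add: lin_mult fs_pow fs_Lam fa_pow_A fs_mon)
  also have "\<dots> = lin (cf q (int m - int l) n) (fa_pow fa_Lam k)"
  proof -
    have "(\<lambda>u. lin (\<lambda>v. cf q (int m) n (u @ v)) (fa_mon 1 (replicate l False))) = cf q (int m - int l) n"
      by (rule ext) (auto simp: lin_mon cf_def dg_append dg_repF pol_append[OF q0] pol_repF[OF q0] sc_one)
    then show ?thesis by simp
  qed
  also have "\<dots> = (if b' = BLamA n m then 1 else 0)"
  proof (cases "m = l")
    case True
    then show ?thesis using BLamA
      by (simp add: lin_Lam_pow_family[where C = "cf q 0", OF family_cf[OF q0 q1] family_base])
  next
    case False
    have "lin (cf q (int m - int l) n) (fa_pow fa_Lam k) = 0"
      by (rule lin_Lam_pow_zero[where e = "int m - int l"]) (use False in \<open>auto simp: cf_def\<close>)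
    then show ?thesis using BLamA False by simp
  qed
  finally show ?thesis .
next
  case (BBLam l k)
  have "lin (cf q (int m) n) (hb_elem b') = lin (\<lambda>u. lin (\<lambda>v. cf q (int m) n (u @ v)) (fa_pow fa_Lam k)) (fa_mon 1 (replicate l True))"
    using BBLam by (simp add: lin_mult fs_pow fs_Lam fa_pow_B fs_mon)
  also have "\<dots> = lin (\<lambda>v. cf q (int m) n (replicate l True @ v)) (fa_pow fa_Lam k)"
    by (simp add: lin_mon)
  also have "\<dots> = 0"
    by (rule lin_Lam_pow_zero[where e = "int m + int l"]) (use m in \<open>auto simp: cf_def dg_append dg_repT\<close>)
  finally show ?thesis using BBLam by simp
qed

lemma family_base_mirror: "cf q 0 j (mirror []) = (if j = 0 then 1 else 0)"
  by (simp add: cf_def mirror_def)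

lemma eval_B:
  assumes q0: "q \<noteq> 0" and q1: "q \<noteq> 1" and m: "0 < m" and vb: "hb_valid b'"
  shows "lin (\<lambda>w. cf q (int m) n (mirror w)) (hb_elem b') = (if b' = BBLam m n then 1 else 0)"
proof (cases b')
  case (BLam k)
  have "lin (\<lambda>w. cf q (int m) n (mirror w)) (fa_pow fa_Lam k) = 0"
    by (rule lin_Lam_pow_zero[where e = "- int m"]) (use m in \<open>auto simp: cf_def dg_mirror\<close>)
  then show ?thesis using BLam by simp
next
  case (BLamA k l)
  have "lin (\<lambda>w. cf q (int m) n (mirror w)) (hb_elem b') = lin (\<lambda>u. lin (\<lambda>v. cf q (int m) n (mirror (u @ v))) (fa_mon 1 (replicate l False))) (fa_pow fa_Lam k)"
    using BLamA by (simp add: lin_mult fs_pow fs_Lam fa_pow_A fs_mon)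
  also have "\<dots> = lin (\<lambda>u. cf q (int m) n (mirror (u @ replicate l False))) (fa_pow fa_Lam k)"
    by (simp add: lin_mon)
  also have "\<dots> = 0"
    by (rule lin_Lam_pow_zero[where e = "- int m - int l"])
       (use m in \<open>auto simp: cf_def dg_append dg_mirror mirror_append mirror_repF dg_repT\<close>)
  finally show ?thesis using BLamA by simp
next
  case (BBLam l k)
  have "lin (\<lambda>w. cf q (int m) n (mirror w)) (hb_elem b') = lin (\<lambda>u. lin (\<lambda>v. cf q (int m) n (mirror (u @ v))) (fa_pow fa_Lam k)) (fa_mon 1 (replicate l True))"
    using BBLam by (simp add: lin_mult fs_pow fs_Lam fa_pow_B fs_mon)
  also have "\<dots> = lin (\<lambda>v. cf q (int m) n (mirror (replicate l True @ v))) (fa_pow fa_Lam k)"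
    by (simp add: lin_mon)
  also have "\<dots> = lin (\<lambda>v. cf q (int m - int l) n (mirror v)) (fa_pow fa_Lam k)"
  proof -
    have "(\<lambda>v. cf q (int m) n (mirror (replicate l True @ v))) = (\<lambda>v. cf q (int m - int l) n (mirror v))"
      by (rule ext) (auto simp: cf_def dg_append mirror_append mirror_repT dg_repF pol_append[OF q0] pol_repF[OF q0] sc_one)
    then show ?thesis by simp
  qed
  also have "\<dots> = (if b' = BBLam m n then 1 else 0)"
  proof (cases "m = l")
    case True
    then show ?thesis using BBLam
      by (simp add: lin_Lam_pow_family[where C = "\<lambda>j w. cf q 0 j (mirror w)", OF family_cf_mirror[OF q0 q1] family_base_mirror])
  next
    case False
    have "lin (\<lambda>v. cf q (int m - int l) n (mirror v)) (fa_pow fa_Lam k) = 0"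
      by (rule lin_Lam_pow_zero[where e = "int l - int m"]) (use False in \<open>auto simp: cf_def dg_mirror\<close>)
    then show ?thesis using BBLam False by simp
  qed
  finally show ?thesis .
qed

lemma good_mirror:
  assumes "q \<noteq> 0" "q \<noteq> 1"
  shows "good q (\<lambda>w. cf q d j (mirror w))"
  using good_cf[OF assms, of d j]
  unfolding good_def
  by (simp add: mirror_append mirror_FT[simplified] mirror_TF[simplified] mirror_def)

lemma main:
  fixes q :: "'k::field"
  assumes q1: "q \<noteq> 1" and p0: "0 < p" and qp: "q ^ p = 1"
    and fx: "finite (supp x)" and fy: "finite (supp y)"
  shows "special_coeffs_zero q p (fa_comm x y)"
  unfolding special_coeffs_zero_def
proof (intro allI impI)
  fix cc b assume ex: "is_expansion q (fa_comm x y) cc" and sp: "hb_special p b"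
  have q0: "q \<noteq> 0" using qp p0 by (metis power_0_left zero_neq_one gr_implies_not0)
  show "cc b = 0"
  proof (cases b)
    case (BLam k) then show ?thesis using sp by simp
  next
    case (BLamA n m)
    with sp have "0 < n" "0 < m" "p dvd n" "p dvd m" by auto
    show ?thesis
    proof (rule coeff_zero[OF good_cf[OF q0 q1] _ _ fx fy ex])
      show "\<forall>u v. cf q (int m) n (u @ v) = cf q (int m) n (v @ u)"
        using trace_cf[OF qp p0 \<open>p dvd n\<close>] \<open>p dvd m\<close> by auto
      show "\<And>b'. hb_valid b' \<Longrightarrow> lin (cf q (int m) n) (hb_elem b') = (if b' = b then 1 else 0)"
        using eval_A[OF q0 q1 \<open>0 < m\<close>] BLamA by simp
    qed
  next
    case (BBLam m n)
    with sp have "0 < n" "0 < m" "p dvd n" "p dvd m" by auto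
    show ?thesis
    proof (rule coeff_zero[OF good_mirror[OF q0 q1] _ _ fx fy ex])
      show "\<forall>u v. cf q (int m) n (mirror (u @ v)) = cf q (int m) n (mirror (v @ u))"
        using trace_cf[OF qp p0 \<open>p dvd n\<close>] \<open>p dvd m\<close> by (auto simp: mirror_append)
      show "\<And>b'. hb_valid b' \<Longrightarrow> lin (\<lambda>w. cf q (int m) n (mirror w)) (hb_elem b') = (if b' = b then 1 else 0)"
        using eval_B[OF q0 q1 \<open>0 < m\<close>] BBLam by simp
    qed
  qed
qed

lemma fs_A: "finite (supp (fa_A :: 'k::comm_ring_1 fa))" by (simp add: fa_A_def fs_mon)
lemma fs_B: "finite (supp (fa_B :: 'k::comm_ring_1 fa))" by (simp add: fa_B_def fs_mon)

theorem lemma1: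
  fixes q :: "'k::field" and p m k n l :: nat
  assumes "q \<noteq> 1" and "0 < p" and "q ^ p = 1"
    and "\<forall>j. 0 < j \<and> j < p \<longrightarrow> q ^ j \<noteq> 1"
    and "0 < n" and "0 < l"
  shows "special_coeffs_zero q p (fa_comm (fa_pow fa_Lam m) (fa_pow fa_Lam k \<odot> fa_pow fa_A l))
       \<and> special_coeffs_zero q p (fa_comm (fa_pow fa_Lam m) (fa_pow fa_B l \<odot> fa_pow fa_Lam k))
       \<and> special_coeffs_zero q p (fa_comm (fa_pow fa_Lam m \<odot> fa_pow fa_A n) (fa_pow fa_Lam k \<odot> fa_pow fa_A l))
       \<and> (n \<noteq> l \<longrightarrow> special_coeffs_zero q p
            (fa_comm (fa_pow fa_Lam m \<odot> fa_pow fa_A n) (fa_pow fa_B l \<odot> fa_pow fa_Lam k)))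
       \<and> special_coeffs_zero q p (fa_comm (fa_pow fa_B n \<odot> fa_pow fa_Lam m) (fa_pow fa_B l \<odot> fa_pow fa_Lam k))"
  using assms(1-3)
  by (intro conjI impI main) (simp_all add: fs_mult fs_pow fs_Lam fs_A fs_B)

end
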